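(* For any ultradiscrete ballean $(X,\mathcal E_X)$, the coarse structure ${\downarrow}\mathcal E_X$ coincides with the universal coarse structure ${\Uparrow}\mathcal B_X$ of its bornology.
   Context: A ballean is a pair $(X,\mathcal E_X)$ where $X$ is a set and $\mathcal E_X$ is a family of subsets of $X\times X$ (entourages) such that: each $E\in\mathcal E_X$ contains the diagonal $\Delta_X$; for any $E,F\in\mathcal E_X$ there is $D\in\mathcal E_X$ with $E\circ F^{-1}\subset D$; and $\bigcup\mathcal E_X=X\times X$. For $E\subset X\times X$, $x\in X$, $A\subset X$: $E[x]=\{y:(x,y)\in E\}$, $E[A]=\bigcup_{a\in A}E[a]$, $E^{-1}=\{(y,x):(x,y)\in E\}$. $B\subset X$ is bounded if $B\subset E[x]$ for some $E\in\mathcal E_X$, $x\in X$; $\mathcal B_X$ is the family of bounded sets. Sets $A,B$ are asymptotically disjoint if $E[A]\cap E[B]\in\mathcal B_X$ for all $E\in\mathcal E_X$; $X$ is ultranormal if it contains no two unbounded asymptotically disjoint sets. $X$ is discrete if $X$ is unbounded and for every $E\in\mathcal E_X$ there is a bounded $B_E$ with $E[x]=\{x\}$ for $x\in X\setminus B_E$; ultradiscrete = discrete and ultranormal. ${\downarrow}\mathcal E_X=\{E\subset X\times X:\Delta_X\subset E\subset F\text{ for some }F\in\mathcal E_X\}$. ${\Uparrow}\mathcal B_X$ is the family of all $G\subset X\times X$ with $\Delta_X\subset G$ such that $G[B]$ and $G^{-1}[B]$ are bounded for every bounded $B\subset X$. *)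

theory Defs
  imports Main
begin

text \<open>Balls: E[x] = {y. (x,y) \<in> E} is written  E `` {x},  and E[A] is  E `` A.\<close>

definition ballean :: "'a set \<Rightarrow> ('a \<times> 'a) set set \<Rightarrow> bool" where
  "ballean X \<E> \<longleftrightarrow>
     (\<forall>E\<in>\<E>. Id_on X \<subseteq> E \<and> E \<subseteq> X \<times> X) \<and>
     (\<forall>E\<in>\<E>. \<forall>F\<in>\<E>. \<exists>D\<in>\<E>. E O F\<inverse> \<subseteq> D) \<and>
     \<Union>\<E> = X \<times> X"

definition bounded_in :: "'a set \<Rightarrow> ('a \<times> 'a) set set \<Rightarrow> 'a set \<Rightarrow> bool" where
  "bounded_in X \<E> B \<longleftrightarrow> (\<exists>E\<in>\<E>. \<exists>x\<in>X. B \<subseteq> E `` {x})"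

definition asymp_disjoint :: "'a set \<Rightarrow> ('a \<times> 'a) set set \<Rightarrow> 'a set \<Rightarrow> 'a set \<Rightarrow> bool" where
  "asymp_disjoint X \<E> A B \<longleftrightarrow> (\<forall>E\<in>\<E>. bounded_in X \<E> (E `` A \<inter> E `` B))"

definition ultranormal :: "'a set \<Rightarrow> ('a \<times> 'a) set set \<Rightarrow> bool" where
  "ultranormal X \<E> \<longleftrightarrow>
     \<not> (\<exists>A B. A \<subseteq> X \<and> B \<subseteq> X \<and> \<not> bounded_in X \<E> A \<and> \<not> bounded_in X \<E> B
              \<and> asymp_disjoint X \<E> A B)"

definition discrete_ballean :: "'a set \<Rightarrow> ('a \<times> 'a) set set \<Rightarrow> bool" where
  "discrete_ballean X \<E> \<longleftrightarrow> \<not> bounded_in X \<E> X \<and>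
     (\<forall>E\<in>\<E>. \<exists>B. B \<subseteq> X \<and> bounded_in X \<E> B \<and> (\<forall>x\<in>X - B. E `` {x} = {x}))"

definition ultradiscrete :: "'a set \<Rightarrow> ('a \<times> 'a) set set \<Rightarrow> bool" where
  "ultradiscrete X \<E> \<longleftrightarrow> discrete_ballean X \<E> \<and> ultranormal X \<E>"

definition down_closure :: "'a set \<Rightarrow> ('a \<times> 'a) set set \<Rightarrow> ('a \<times> 'a) set set" where
  "down_closure X \<E> = {E. Id_on X \<subseteq> E \<and> (\<exists>F\<in>\<E>. E \<subseteq> F)}"

definition universal_coarse :: "'a set \<Rightarrow> ('a \<times> 'a) set set \<Rightarrow> ('a \<times> 'a) set set" where
  "universal_coarse X \<E> = {G. Id_on X \<subseteq> G \<and> G \<subseteq> X \<times> X \<and>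
     (\<forall>B. B \<subseteq> X \<longrightarrow> bounded_in X \<E> B \<longrightarrow>
        bounded_in X \<E> (G `` B) \<and> bounded_in X \<E> (G\<inverse> `` B))}"

end

theory Submission
  imports Defs
begin

lemma bl_sub: "ballean X \<E> \<Longrightarrow> E \<in> \<E> \<Longrightarrow> E \<subseteq> X \<times> X"
  unfolding ballean_def by blast

lemma bl_id: "ballean X \<E> \<Longrightarrow> E \<in> \<E> \<Longrightarrow> x \<in> X \<Longrightarrow> (x,x) \<in> E"
  unfolding ballean_def Id_on_def by blast

lemma bl_comp_ax: "ballean X \<E> \<Longrightarrow> E \<in> \<E> \<Longrightarrow> F \<in> \<E> \<Longrightarrow> \<exists>D\<in>\<E>. E O F\<inverse> \<subseteq> D"
  unfolding ballean_def by blast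

lemma bl_inv:
  assumes b: "ballean X \<E>" and E: "E \<in> \<E>"
  shows "\<exists>D\<in>\<E>. E\<inverse> \<subseteq> D"
proof -
  obtain D where D: "D \<in> \<E>" "E O E\<inverse> \<subseteq> D" using bl_comp_ax[OF b E E] by blast
  have "E\<inverse> \<subseteq> E O E\<inverse>"
  proof
    fix p assume "p \<in> E\<inverse>"
    then obtain a c where p: "p = (a,c)" "(c,a) \<in> E" by auto
    then have "a \<in> X" using bl_sub[OF b E] by auto
    then have "(a,a) \<in> E" using bl_id[OF b E] by auto
    then show "p \<in> E O E\<inverse>" using p by auto
  qed
  then show ?thesis using D by blast
qed

lemma bl_comp:
  assumes b: "ballean X \<E>" and E: "E \<in> \<E>" and F: "F \<in> \<E>"
  shows "\<exists>D\<in>\<E>. E O F \<subseteq> D"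
proof -
  obtain D' where D': "D' \<in> \<E>" "F\<inverse> \<subseteq> D'" using bl_inv[OF b F] by blast
  obtain D where D: "D \<in> \<E>" "E O D'\<inverse> \<subseteq> D" using bl_comp_ax[OF b E D'(1)] by blast
  have "F \<subseteq> D'\<inverse>" using D'(2) by auto
  then have "E O F \<subseteq> E O D'\<inverse>" by auto
  then show ?thesis using D by blast
qed

lemma bl_img:
  assumes b: "ballean X \<E>" and B: "bounded_in X \<E> B" and F: "F \<in> \<E>"
  shows "bounded_in X \<E> (F `` B)"
proof -
  obtain H x where H: "H \<in> \<E>" "x \<in> X" "B \<subseteq> H `` {x}" using B unfolding bounded_in_def by blast
  obtain D where D: "D \<in> \<E>" "H O F \<subseteq> D" using bl_comp[OF b H(1) F] by blast
  have "F `` B \<subseteq> D `` {x}" using H(3) D(2) by blast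
  then show ?thesis unfolding bounded_in_def using D(1) H(2) by blast
qed

lemma bd_mono: "bounded_in X \<E> B \<Longrightarrow> A \<subseteq> B \<Longrightarrow> bounded_in X \<E> A"
  unfolding bounded_in_def by blast

lemma bd_sub:
  assumes b: "ballean X \<E>" and B: "bounded_in X \<E> B" shows "B \<subseteq> X"
proof -
  obtain H x where H: "H \<in> \<E>" "x \<in> X" "B \<subseteq> H `` {x}" using B unfolding bounded_in_def by blast
  show ?thesis using H(3) bl_sub[OF b H(1)] by blast
qed

lemma bd_un:
  assumes b: "ballean X \<E>" and B1: "bounded_in X \<E> B1" and B2: "bounded_in X \<E> B2"
  shows "bounded_in X \<E> (B1 \<union> B2)"
proof -
  obtain H1 x1 where H1: "H1 \<in> \<E>" "x1 \<in> X" "B1 \<subseteq> H1 `` {x1}" using B1 unfolding bounded_in_def by blast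
  obtain H2 x2 where H2: "H2 \<in> \<E>" "x2 \<in> X" "B2 \<subseteq> H2 `` {x2}" using B2 unfolding bounded_in_def by blast
  have "(x1,x2) \<in> \<Union>\<E>" using b H1(2) H2(2) unfolding ballean_def by auto
  then obtain K where K: "K \<in> \<E>" "(x1,x2) \<in> K" by blast
  obtain D1 where D1: "D1 \<in> \<E>" "K O H2 \<subseteq> D1" using bl_comp[OF b K(1) H2(1)] by blast
  obtain D where D: "D \<in> \<E>" "H1 O D1 \<subseteq> D" using bl_comp[OF b H1(1) D1(1)] by blast
  have "B1 \<subseteq> D `` {x1}"
  proof
    fix y assume "y \<in> B1"
    then have y: "(x1,y) \<in> H1" using H1(3) by auto
    then have "y \<in> X" using bl_sub[OF b H1(1)] by auto
    then have "(y,y) \<in> D1" using bl_id[OF b D1(1)] by auto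
    then show "y \<in> D `` {x1}" using y D(2) by auto
  qed
  moreover have "B2 \<subseteq> D `` {x1}"
  proof
    fix y assume "y \<in> B2"
    then have "(x2,y) \<in> H2" using H2(3) by auto
    then have y: "(x1,y) \<in> D1" using K(2) D1(2) by auto
    have "(x1,x1) \<in> H1" using bl_id[OF b H1(1) H1(2)] .
    then show "y \<in> D `` {x1}" using y D(2) by auto
  qed
  ultimately show ?thesis unfolding bounded_in_def using D(1) H1(2) by blast
qed

lemma disj_asymp:
  assumes b: "ballean X \<E>" and d: "discrete_ballean X \<E>" and MX: "M \<subseteq> X"
  shows "asymp_disjoint X \<E> M (X - M)"
  unfolding asymp_disjoint_def
proof
  fix E assume E: "E \<in> \<E>"
  obtain B where B: "B \<subseteq> X" "bounded_in X \<E> B" "\<forall>x\<in>X - B. E `` {x} = {x}"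
    using d E unfolding discrete_ballean_def by blast
  have "E `` M \<inter> E `` (X - M) \<subseteq> E `` B"
  proof
    fix z assume "z \<in> E `` M \<inter> E `` (X - M)"
    then obtain a c where ac: "a \<in> M" "(a,z) \<in> E" "c \<in> X" "c \<notin> M" "(c,z) \<in> E" by auto
    show "z \<in> E `` B"
    proof (cases "a \<in> B")
      case True then show ?thesis using ac by auto
    next
      case False
      then have "E `` {a} = {a}" using B(3) ac(1) MX by auto
      then have za: "z = a" using ac(2) by auto
      show ?thesis
      proof (cases "c \<in> B")
        case True then show ?thesis using ac by auto
      next
        case False
        then have "E `` {c} = {c}" using B(3) ac(3) by auto
        then have "z = c" using ac(5) by auto
        then show ?thesis using za ac by auto
      qed
    qed
  qed
  then show "bounded_in X \<E> (E `` M \<inter> E `` (X - M))"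
    using bd_mono bl_img[OF b B(2) E] by blast
qed

definition indep :: "('a \<times> 'a) set \<Rightarrow> 'a set \<Rightarrow> bool" where
  "indep G M \<longleftrightarrow> (\<forall>x\<in>M. \<forall>y\<in>M. (x,y) \<in> G \<longrightarrow> x = y)"

lemma max_indep:
  "\<exists>M\<in>{M. M \<subseteq> X \<and> indep G M}. \<forall>Z\<in>{M. M \<subseteq> X \<and> indep G M}. M \<subseteq> Z \<longrightarrow> Z = M"
proof (rule Zorn_Lemma)
  show "\<forall>C\<in>chains {M. M \<subseteq> X \<and> indep G M}. \<Union>C \<in> {M. M \<subseteq> X \<and> indep G M}"
  proof
    fix C assume C: "C \<in> chains {M. M \<subseteq> X \<and> indep G M}"
    have "indep G (\<Union>C)" unfolding indep_def
    proof (intro ballI impI)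
      fix x y assume "x \<in> \<Union>C" "y \<in> \<Union>C" "(x,y) \<in> G"
      then obtain S1 S2 where S: "S1 \<in> C" "S2 \<in> C" "x \<in> S1" "y \<in> S2" "(x,y) \<in> G" by auto
      have "S1 \<subseteq> S2 \<or> S2 \<subseteq> S1" using C S unfolding chains_def chain_subset_def by blast
      then show "x = y" using C S unfolding chains_def indep_def by blast
    qed
    moreover have "\<Union>C \<subseteq> X" using C unfolding chains_def by blast
    ultimately show "\<Union>C \<in> {M. M \<subseteq> X \<and> indep G M}" by blast
  qed
qed

theorem proposition6p3:
  fixes X :: "'a set" and \<E> :: "('a \<times> 'a) set set"
  assumes "ballean X \<E>" and "ultradiscrete X \<E>"
  shows "down_closure X \<E> = universal_coarse X \<E>"
proof
  note b = assms(1)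
  have d: "discrete_ballean X \<E>" and u: "ultranormal X \<E>"
    using assms(2) unfolding ultradiscrete_def by auto
  show "down_closure X \<E> \<subseteq> universal_coarse X \<E>"
  proof
    fix E assume "E \<in> down_closure X \<E>"
    then obtain F where F: "Id_on X \<subseteq> E" "F \<in> \<E>" "E \<subseteq> F" unfolding down_closure_def by blast
    obtain D where D: "D \<in> \<E>" "F\<inverse> \<subseteq> D" using bl_inv[OF b F(2)] by blast
    have "E \<subseteq> X \<times> X" using F bl_sub[OF b] by blast
    moreover have "bounded_in X \<E> (E `` B) \<and> bounded_in X \<E> (E\<inverse> `` B)"
      if "bounded_in X \<E> B" for B
    proof
      have "E `` B \<subseteq> F `` B" using F(3) by blast
      then show "bounded_in X \<E> (E `` B)" by (rule bd_mono[OF bl_img[OF b that F(2)]])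
      have "E\<inverse> `` B \<subseteq> D `` B" using F(3) D(2) by blast
      then show "bounded_in X \<E> (E\<inverse> `` B)" by (rule bd_mono[OF bl_img[OF b that D(1)]])
    qed
    ultimately show "E \<in> universal_coarse X \<E>" unfolding universal_coarse_def using F(1) by blast
  qed
  show "universal_coarse X \<E> \<subseteq> down_closure X \<E>"
  proof
    fix G assume "G \<in> universal_coarse X \<E>"
    then have G: "Id_on X \<subseteq> G" "G \<subseteq> X \<times> X"
      "\<And>B. B \<subseteq> X \<Longrightarrow> bounded_in X \<E> B \<Longrightarrow> bounded_in X \<E> (G `` B) \<and> bounded_in X \<E> (G\<inverse> `` B)"
      unfolding universal_coarse_def by blast+
    have Gb: "bounded_in X \<E> (G `` B)" "bounded_in X \<E> (G\<inverse> `` B)" if "bounded_in X \<E> B" for B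
      using G(3)[OF bd_sub[OF b that] that] by (simp_all only:)
    obtain M where M: "M \<subseteq> X" "indep G M"
      and Mmax: "\<And>Z. Z \<subseteq> X \<Longrightarrow> indep G Z \<Longrightarrow> M \<subseteq> Z \<Longrightarrow> Z = M"
      using max_indep[of X G] by (auto simp only: mem_Collect_eq)
    have cover: "X \<subseteq> M \<union> G `` M \<union> G\<inverse> `` M"
    proof
      fix x assume x: "x \<in> X"
      show "x \<in> M \<union> G `` M \<union> G\<inverse> `` M"
      proof (cases "x \<in> M")
        case False
        have "\<not> indep G (insert x M)" using Mmax[of "insert x M"] M x False by auto
        then obtain u v where uv: "u \<in> insert x M" "v \<in> insert x M" "(u,v) \<in> G" "u \<noteq> v"
          unfolding indep_def by blast
        have "\<not> (u \<in> M \<and> v \<in> M)" using M(2) uv unfolding indep_def by blast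
        then show ?thesis using uv by auto
      qed simp
    qed
    have Munb: "\<not> bounded_in X \<E> M"
    proof
      assume "bounded_in X \<E> M"
      then have "bounded_in X \<E> (M \<union> G `` M \<union> G\<inverse> `` M)" using bd_un[OF b] Gb by simp
      then have "bounded_in X \<E> X" using cover by (rule bd_mono)
      then show False using d unfolding discrete_ballean_def by blast
    qed
    have Nb: "bounded_in X \<E> (X - M)"
      using u Munb M(1) disj_asymp[OF b d M(1)] unfolding ultranormal_def by blast
    define C where "C = (X - M) \<union> G `` (X - M) \<union> G\<inverse> `` (X - M)"
    have "bounded_in X \<E> C" unfolding C_def using bd_un[OF b] Gb Nb by simp
    then obtain H x0 where H: "H \<in> \<E>" "x0 \<in> X" "C \<subseteq> H `` {x0}" unfolding bounded_in_def by blast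
    obtain D' where D': "D' \<in> \<E>" "H\<inverse> \<subseteq> D'" using bl_inv[OF b H(1)] by blast
    obtain D where D: "D \<in> \<E>" "H\<inverse> O H \<subseteq> D" using bl_comp[OF b D'(1) H(1)] D'(2) by blast
    have "G \<subseteq> D"
    proof
      fix p assume p: "p \<in> G"
      then obtain a c where ac: "p = (a,c)" "(a,c) \<in> G" by (cases p) auto
      have acX: "a \<in> X" "c \<in> X" using ac G(2) by auto
      show "p \<in> D"
      proof (cases "a = c")
        case True then show ?thesis using ac acX bl_id[OF b D(1)] by auto
      next
        case False
        then have "a \<notin> M \<or> c \<notin> M" using M(2) ac unfolding indep_def by blast
        then have "a \<in> C \<and> c \<in> C" unfolding C_def using ac acX by blast
        then have "(x0,a) \<in> H" "(x0,c) \<in> H" using H(3) by auto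
        then have "(a,c) \<in> H\<inverse> O H" by auto
        then show ?thesis using D(2) ac by auto
      qed
    qed
    then show "G \<in> down_closure X \<E>" unfolding down_closure_def using G(1) D(1) by blast
  qed
qed

end
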